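(* Let $x\ge 0$ and $y,z,p>0$ (the approximation is intended for the regime $x\ll y,z,p$). Let $a=(y+z)/2$ and $g=\sqrt{yz}$. Then $$R_J(x,y,z,p)=R_J(0,y,z,p)+\frac{3\sqrt x}{gp}\left(-1+\frac{\pi\theta}{4}\sqrt{\frac xg}\right),$$ where $\frac{\sqrt{g/a}}{1+\sqrt{x/a}}<\theta<\frac ag+\frac gp$.
   Context: For $x,y,z\ge 0$ with at most one zero and $p>0$: $R_J(x,y,z,p)=\frac32\int_0^\infty[(t+x)(t+y)(t+z)]^{-1/2}(t+p)^{-1}\,dt$. *)

theory Defs
  imports "HOL-Analysis.Analysis"
begin

definition carlson_RJ :: "real \<Rightarrow> real \<Rightarrow> real \<Rightarrow> real \<Rightarrow> real" where
  "carlson_RJ x y z p =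
     3 / 2 * integral {0..} (\<lambda>t. 1 / (sqrt ((t + x) * (t + y) * (t + z)) * (t + p)))"

end

theory Submission
  imports Defs "HOL-Real_Asymp.Real_Asymp"
begin


lemma FTC_0_inf:
  fixes f F :: "real \<Rightarrow> real"
  assumes F: "\<And>t. t > 0 \<Longrightarrow> DERIV F t :> f t"
    and c: "\<And>t. t > 0 \<Longrightarrow> isCont f t"
    and nn: "\<And>t. t > 0 \<Longrightarrow> 0 \<le> f t"
    and A: "(F \<longlongrightarrow> A) (at_right 0)"
    and B: "(F \<longlongrightarrow> B) at_top"
  shows "(f has_integral (B - A)) {0<..}"
proof -
  have 1: "set_integrable lborel (einterval 0 \<infinity>) f" "(LBINT x=0..\<infinity>. f x) = B - A"
    by (rule interval_integral_FTC_nonneg[where F=F],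
        auto simp: zero_ereal_def ereal_tendsto_simps intro!: F c nn A B)+
  have 2: "set_integrable lborel {0<..} f" using 1 by (simp add: zero_ereal_def)
  have "(LBINT x=0..\<infinity>. f x) = (LINT x:{0<..}|lborel. f x)"
    by (simp add: interval_lebesgue_integral_0_infty)
  then show ?thesis using set_borel_integral_eq_integral[OF 2] 1
    by (metis integrable_integral)
qed



lemma k_int:
  fixes c :: real assumes c: "c > 0"
  shows "((\<lambda>t. 1 / (sqrt t * (t + c))) has_integral (pi / sqrt c)) {0<..}"
proof -
  define F where "F t = 2 / sqrt c * arctan (sqrt t / sqrt c)" for t
  have "((\<lambda>t. 1 / (sqrt t * (t + c))) has_integral (pi / sqrt c - 0)) {0<..}"
  proof (rule FTC_0_inf[where F=F])
    fix t :: real assume t: "t > 0"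
    show "DERIV F t :> 1 / (sqrt t * (t + c))"
    proof -
      have sc: "sqrt c * sqrt c = c" using c by simp
      have st: "sqrt t * sqrt t = t" using t by simp
      show ?thesis
      unfolding F_def using t c
      by (auto intro!: derivative_eq_intros simp: power2_eq_square divide_simps)
    qed
    show "isCont (\<lambda>t. 1 / (sqrt t * (t + c))) t" using t c
      by (intro continuous_intros) auto
    show "0 \<le> 1 / (sqrt t * (t + c))" using t c by auto
  next
    show "(F \<longlongrightarrow> 0) (at_right 0)" unfolding F_def using c by real_asymp
    have "(F \<longlongrightarrow> pi / root 2 c) at_top" unfolding F_def using c by real_asymp
    then show "(F \<longlongrightarrow> pi / sqrt c) at_top" by (simp add: sqrt_def)
  qed
  then show ?thesis by simp
qed

lemma f_int:
  fixes x :: real assumes x: "x > 0"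
  shows "((\<lambda>t. 1 / sqrt t - 1 / sqrt (t + x)) has_integral (2 * sqrt x)) {0<..}"
proof -
  define F where "F t = 2 * sqrt t - 2 * sqrt (t + x)" for t
  have "((\<lambda>t. 1 / sqrt t - 1 / sqrt (t + x)) has_integral (0 - (- 2 * sqrt x))) {0<..}"
  proof (rule FTC_0_inf[where F=F])
    fix t :: real assume t: "t > 0"
    show "DERIV F t :> 1 / sqrt t - 1 / sqrt (t + x)"
      unfolding F_def using t x
      by (auto intro!: derivative_eq_intros simp: field_simps) 
    show "isCont (\<lambda>t. 1 / sqrt t - 1 / sqrt (t + x)) t" using t x
      by (intro continuous_intros) auto
    show "0 \<le> 1 / sqrt t - 1 / sqrt (t + x)" using t x
      by (auto simp: field_simps)
  next
    have "(F \<longlongrightarrow> - (2 * x powr (1/2))) (at_right 0)" unfolding F_def using x by real_asymp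
    then show "(F \<longlongrightarrow> - 2 * sqrt x) (at_right 0)" using x by (simp add: powr_half_sqrt)
    show "(F \<longlongrightarrow> 0) at_top" unfolding F_def using x by real_asymp
  qed
  then show ?thesis by simp
qed



lemma q_int:
  fixes B C :: real assumes B: "B > 0" and C: "C > 0" and BC: "B \<noteq> C"
  shows "((\<lambda>t. sqrt t / ((t + B) * (t + C))) has_integral (pi / (sqrt B + sqrt C))) {0<..}"
proof -
  have h: "((\<lambda>t. (C * (1 / (sqrt t * (t + C))) - B * (1 / (sqrt t * (t + B)))) / (C - B))
     has_integral ((C * (pi / sqrt C) - B * (pi / sqrt B)) / (C - B))) {0<..}"
    by (intro has_integral_divide has_integral_diff has_integral_mult_right k_int B C)
  have e1: "(C * (pi / sqrt C) - B * (pi / sqrt B)) / (C - B) = pi / (sqrt B + sqrt C)"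
  proof -
    have "C * (pi / sqrt C) = pi * sqrt C" using C by (simp add: field_simps real_sqrt_mult_self)
    moreover have "B * (pi / sqrt B) = pi * sqrt B" using B by (simp add: field_simps)
    moreover have "C - B = (sqrt C - sqrt B) * (sqrt C + sqrt B)" using B C
      by (simp add: algebra_simps)
    moreover have "sqrt C - sqrt B \<noteq> 0" using BC B C by auto
    moreover have "sqrt C + sqrt B > 0" using B C by (simp add: add_pos_pos)
    ultimately show ?thesis by (simp add: field_simps)
  qed
  have e2: "(C * (1 / (sqrt t * (t + C))) - B * (1 / (sqrt t * (t + B)))) / (C - B)
       = sqrt t / ((t + B) * (t + C))" if t: "t \<in> {0<..}" for t
  proof -
    define s where "s = sqrt t"
    have s: "s > 0" "t = s * s" using t by (auto simp: s_def)
    have CB: "C - B \<noteq> 0" using BC by simp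
    define u v where "u = s * s + B" and "v = s * s + C"
    have u: "u > 0" and v: "v > 0" using B C s by (auto simp: u_def v_def intro!: add_pos_pos)
    have num: "C * u - B * v = s * s * (C - B)" by (simp add: u_def v_def algebra_simps)
    have "(C * (1 / (s * v)) - B * (1 / (s * u))) / (C - B) = ((C * u - B * v) / (s * u * v)) / (C - B)"
      using u v s by (simp add: field_simps)
    also have "\<dots> = s / (u * v)" unfolding num using u v s CB by (simp add: field_simps)
    finally have "(C * (1 / (s * v)) - B * (1 / (s * u))) / (C - B) = s / (u * v)" .
    then show ?thesis unfolding u_def v_def s_def[symmetric] s(2)[symmetric] .
  qed
  show ?thesis
    by (rule has_integral_eq[where f="\<lambda>t. (C * (1 / (sqrt t * (t + C))) - B * (1 / (sqrt t * (t + B)))) / (C - B)", OF e2])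
       (use h e1 in auto)
qed

lemma strict_int:
  fixes F G :: "real \<Rightarrow> real"
  assumes F: "F integrable_on {0<..}" and G: "G integrable_on {0<..}"
    and le: "\<And>t. t > 0 \<Longrightarrow> F t \<le> G t"
    and c: "continuous_on {1..2} (\<lambda>t. G t - F t)"
    and lt: "\<And>t. t \<in> {1..2} \<Longrightarrow> F t < G t"
  shows "integral {0<..} F < integral {0<..} G"
proof -
  let ?H = "\<lambda>t. G t - F t"
  have H: "?H integrable_on {0<..}" by (rule integrable_diff[OF G F])
  obtain m where m: "m \<in> {1..2}" "\<And>u. u \<in> {1..2} \<Longrightarrow> ?H m \<le> ?H u"
    using continuous_attains_inf[of "{1..2::real}" ?H] c by auto
  have mpos: "?H m > 0" using lt m(1) by auto
  have H12: "?H integrable_on {1..2}" by (rule integrable_continuous_interval[OF c])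
  have "integral {1..2::real} (\<lambda>_. ?H m) \<le> integral {1..2} ?H"
    by (rule integral_le[OF _ H12]) (auto intro: m(2))
  also have "\<dots> \<le> integral {0<..} ?H"
    by (rule integral_subset_le[OF _ H12 H]) (auto intro: le less_imp_le simp: le)
  finally have "0 < integral {0<..} ?H" using mpos by simp
  then show ?thesis using integral_diff[OF G F] by simp
qed



lemma I_int:
  fixes c y z p :: real
  assumes c: "c \<ge> 0" and y: "y > 0" and z: "z > 0" and p: "p > 0"
  shows "(\<lambda>t. 1 / (sqrt ((t + c) * (t + y) * (t + z)) * (t + p))) integrable_on {0<..}"
proof -
  define m where "m = min y z"
  have m: "m > 0" "m \<le> y" "m \<le> z" using y z by (auto simp: m_def)
  let ?I = "\<lambda>t. 1 / (sqrt ((t + c) * (t + y) * (t + z)) * (t + p))"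
  let ?G = "\<lambda>t. 1 / p * (1 / (sqrt t * (t + m)))"
  have G: "?G integrable_on {0<..}"
    using has_integral_mult_right[OF k_int[OF m(1)], of "1/p"] by blast
  have cont: "continuous_on {0<..} ?I"
  proof (intro continuous_intros ballI, goal_cases)
    case (1 t)
    then have "(t + c) * (t + y) * (t + z) > 0" "t + p > 0" using c y z p by auto
    then show ?case by (simp del: mult_eq_0_iff) (metis less_irrefl mult_eq_0_iff)
  qed
  have meas: "?I \<in> borel_measurable (lebesgue_on {0<..})"
    by (rule continuous_imp_measurable_on_sets_lebesgue[OF cont]) simp
  have bound: "norm (?I t) \<le> ?G t" if t: "t \<in> {0<..}" for t
  proof -
    have t0: "t > 0" using t by simp
    have "t * ((t + m) * (t + m)) \<le> (t + c) * ((t + y) * (t + z))"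
      using t0 c m by (intro mult_mono) auto
    then have "sqrt (t * ((t + m) * (t + m))) \<le> sqrt ((t + c) * (t + y) * (t + z))"
      by (simp add: ac_simps)
    moreover have "sqrt (t * ((t + m) * (t + m))) = sqrt t * (t + m)"
      using t0 m by (simp add: real_sqrt_mult)
    ultimately have s1: "sqrt t * (t + m) \<le> sqrt ((t + c) * (t + y) * (t + z))" by simp
    have pos: "0 < sqrt t * (t + m) * p" using t0 m p by simp
    have "sqrt t * (t + m) * p \<le> sqrt ((t + c) * (t + y) * (t + z)) * (t + p)"
      using s1 t0 p m c y z by (intro mult_mono) auto
    then have "1 / (sqrt ((t + c) * (t + y) * (t + z)) * (t + p)) \<le> 1 / (sqrt t * (t + m) * p)"
      using pos by (intro divide_left_mono) auto
    moreover have "0 \<le> 1 / (sqrt ((t + c) * (t + y) * (t + z)) * (t + p))"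
      using t0 c y z p by simp
    ultimately show ?thesis by (simp add: ac_simps)
  qed
  have "?I absolutely_integrable_on {0<..}"
    by (rule measurable_bounded_by_integrable_imp_absolutely_integrable[OF meas _ G bound]) simp
  then show ?thesis by (simp add: absolutely_integrable_on_def)
qed

lemma int_Ici:
  fixes F :: "real \<Rightarrow> real"
  shows "integral {0..} F = integral {0<..} F"
proof -
  have hv: "(F has_integral v) {0..} \<longleftrightarrow> (F has_integral v) {0<..}" for v
    by (rule has_integral_spike_set_eq) (auto intro: negligible_subset[of "{0}"])
  then have "F integrable_on {0..} \<longleftrightarrow> F integrable_on {0<..}" unfolding integrable_on_def by simp
  then show ?thesis unfolding integral_def using hv by simp
qed



lemma Abounds:
  fixes t y z :: real
  assumes t: "t > 0" and y: "y > 0" and z: "z > 0"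
  defines "a \<equiv> (y + z) / 2" and "g \<equiv> sqrt (y * z)"
  shows "g / sqrt ((t + y) * (t + z)) \<le> a / (t + a)"
    and "g / sqrt ((t + y) * (t + z)) \<le> g / (t + g)"
    and "1 - g / sqrt ((t + y) * (t + z)) \<le> a / g * (t / (t + g))"
proof -
  define Q where "Q = sqrt ((t + y) * (t + z))"
  have g0: "g > 0" using y z by (simp add: g_def)
  have gg: "g * g = y * z" using y z by (simp add: g_def)
  have ga: "g \<le> a" 
  proof -
    have "(y + z)^2 - 4 * (g * g) = (y - z)^2" by (simp add: gg power2_eq_square algebra_simps)
    moreover have "(2 * g)^2 = 4 * (g * g)" by (simp add: power2_eq_square)
    ultimately have "(2 * g)^2 \<le> (y + z)^2" using zero_le_power2[of "y - z"] by linarith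
    then have "2 * g \<le> y + z" using power2_le_imp_le[of "2*g" "y+z"] y z by linarith
    then show ?thesis by (simp add: a_def)
  qed
  have QQ: "Q * Q = t * t + 2 * a * t + g * g" using t y z
    by (simp add: Q_def a_def gg algebra_simps)
  have Q0: "Q > 0" using t y z by (simp add: Q_def)
  have Qg: "t + g \<le> Q"
  proof -
    have "(t + g) * (t + g) \<le> Q * Q" using QQ ga t by (simp add: algebra_simps) 
    then show ?thesis using power2_le_imp_le[of "t+g" Q] Q0 by (simp add: power2_eq_square)
  qed
  show "g / sqrt ((t + y) * (t + z)) \<le> a / (t + a)"
  proof -
    have "(g * (t + a)) * (g * (t + a)) \<le> (a * Q) * (a * Q)"
    proof -
      have "(g * (t + a)) * (g * (t + a)) = (g*g) * (t + a) * (t + a)" by simp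
      also have "\<dots> \<le> (a * a) * (t*t + 2*a*t + g*g)"
      proof -
        have d: "(a*a)*(t*t+2*a*t+g*g) - (g*g)*(t+a)*(t+a) = (a*a-g*g)*(t*t+2*a*t)"
          by (simp add: algebra_simps)
        have "a * a - g * g \<ge> 0" using ga g0 by (simp add: mult_mono)
        moreover have "t*t+2*a*t \<ge> 0" using t ga g0 by simp
        ultimately have "(a*a-g*g)*(t*t+2*a*t) \<ge> 0" by simp
        then show ?thesis using d by linarith
      qed
      also have "\<dots> = (a * a) * (Q * Q)" using QQ by simp
      also have "\<dots> = (a * Q) * (a * Q)" by (simp add: ac_simps)
      finally show ?thesis .
    qed
    then have "g * (t + a) \<le> a * Q" using power2_le_imp_le[of "g * (t + a)" "a * Q"] g0 ga Q0
      by (simp add: power2_eq_square)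
    then show ?thesis unfolding Q_def[symmetric] using Q0 g0 ga t
      by (simp add: divide_simps)
  qed
  show "g / sqrt ((t + y) * (t + z)) \<le> g / (t + g)"
    unfolding Q_def[symmetric] using Qg g0 t by (simp add: frac_le)
  show "1 - g / sqrt ((t + y) * (t + z)) \<le> a / g * (t / (t + g))"
  proof -
    have "1 - g / Q = t * (t + 2 * a) / (Q * (Q + g))"
      using Q0 g0 QQ by (simp add: divide_simps) (simp add: algebra_simps)
    also have "\<dots> \<le> t * (t + 2 * a) / ((t + g) * (t + 2 * g))"
      using Qg Q0 g0 t ga by (intro divide_left_mono mult_mono mult_pos_pos) auto
    also have "\<dots> \<le> a / g * (t / (t + g))"
      using g0 t ga by (simp add: divide_simps) (simp add: algebra_simps mult_left_mono)
    finally show ?thesis unfolding Q_def .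
  qed
qed



lemma fbounds:
  fixes t x \<beta> :: real
  assumes t: "t > 0" and x: "x > 0" and b: "3 * x / 4 \<le> \<beta>"
  shows "x * sqrt t / (2 * (t + \<beta>)) \<le> (1 / sqrt t - 1 / sqrt (t + x)) * t"
    and "1 / sqrt t - 1 / sqrt (t + x) < x / (2 * t * sqrt t)"
    and "0 < 1 / sqrt t - 1 / sqrt (t + x)"
proof -
  define s r where "s = sqrt t" and "r = sqrt (t + x)"
  have st: "sqrt t * sqrt t = t" using t by simp
  have s0: "s > 0" and ts: "t = s * s" using t by (auto simp: s_def)
  have r0: "r > 0" and rr: "r * r = s * s + x" using t x by (auto simp: r_def ts)
  have rs: "s < r"
    unfolding s_def r_def using x by simp
  have diff: "1 / s - 1 / r = x / (s * r * (r + s))"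
  proof -
    have h: "(r - s) * (r + s) = x" using rr by (simp add: algebra_simps)
    have "x / (s * r * (r + s)) = ((r - s) * (r + s)) / ((s * r) * (r + s))" using h by simp
    also have "\<dots> = (r - s) / (s * r)" using s0 r0 by (simp only: mult_divide_mult_cancel_right)
    also have "\<dots> = 1 / s - 1 / r" using s0 r0 by (simp add: field_simps)
    finally show ?thesis by simp
  qed
  show "0 < 1 / sqrt t - 1 / sqrt (t + x)"
    unfolding s_def[symmetric] r_def[symmetric] diff using x s0 r0 by simp
  have "1 / s - 1 / r < x / (2 * (s * s) * s)"
    unfolding diff
  proof -
    have "2 * (s * s) * s < s * r * (r + s)"
    proof -
      have "s * s < s * r" using rs s0 by simp
      moreover have "2 * s < r + s" using rs by simp
      ultimately have "(s * s) * (2 * s) < (s * r) * (r + s)"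
        by (rule mult_strict_mono) (use s0 r0 in auto)
      then show ?thesis by (simp add: ac_simps)
    qed
    then show "x / (s * r * (r + s)) < x / (2 * (s * s) * s)" using x s0 r0
      by (intro divide_strict_left_mono) auto
  qed
  then show "1 / sqrt t - 1 / sqrt (t + x) < x / (2 * t * sqrt t)"
    using st by (simp only: s_def r_def)
  have "x * s / (2 * (s * s + \<beta>)) \<le> (1 / s - 1 / r) * (s * s)"
    unfolding diff
  proof -
    have rsle: "s * r \<le> s * s + x / 2"
    proof -
      have "(s * r) * (s * r) = (s * s) * (r * r)" by (simp add: ac_simps)
      also have "\<dots> = (s * s) * (s * s + x)" using rr by simp
      also have "\<dots> \<le> (s * s + x / 2) * (s * s + x / 2)"
        using x by (simp add: algebra_simps)
      finally have "(s * r) * (s * r) \<le> (s * s + x / 2) * (s * s + x / 2)" .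
      then show ?thesis using power2_le_imp_le[of "s * r" "s * s + x / 2"] s0 x
        by (simp add: power2_eq_square)
    qed
    have key: "r * (r + s) \<le> 2 * (s * s + \<beta>)" using rr rsle b by (simp add: algebra_simps)
    have "x * s / (2 * (s * s + \<beta>)) \<le> x * s / (r * (r + s))"
    proof (rule divide_left_mono)
      show "r * (r + s) \<le> 2 * (s * s + \<beta>)" by (rule key)
      show "0 \<le> x * s" using x s0 by simp
      have "0 < r * (r + s)" using r0 s0 by simp
      moreover have "0 < 2 * (s * s + \<beta>)" using key r0 s0
        by (smt (verit) mult_pos_pos)
      ultimately show "0 < 2 * (s * s + \<beta>) * (r * (r + s))" by simp
    qed
    also have "\<dots> = x / (s * r * (r + s)) * (s * s)"
    proof -
      have "r * r + r * s > 0" "r * (r * s) + r * (s * s) > 0" using s0 r0 by (auto intro!: add_pos_pos)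
      then show ?thesis using s0 r0 by (simp add: field_simps)
    qed
    finally show "x * s / (2 * (s * s + \<beta>)) \<le> x / (s * r * (r + s)) * (s * s)" .
  qed
  then show "x * sqrt t / (2 * (t + \<beta>)) \<le> (1 / sqrt t - 1 / sqrt (t + x)) * t"
    using st by (simp only: s_def r_def)
qed



lemma frac_help1:
  fixes u v Q P :: real
  assumes "u > 0" "v > 0" "Q > 0" "P > 0"
  shows "1 / (u * Q * P) - 1 / (v * Q * P) = (1 / u - 1 / v) / (Q * P)"
  using assms by (simp add: field_simps)

lemma frac_help2:
  fixes F g p Q P :: real
  assumes "Q > 0" "P > 0"
  shows "F - g * p * (F / (Q * P)) = F * (1 - g / Q * (p / P))"
  using assms by (simp add: field_simps)

lemma frac_help3:
  fixes x t s K g :: real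
  assumes "t > 0" "s > 0" "g > 0"
  shows "x / (2 * t * s) * (K * (t / (t + g))) = K * (x / 2) * (1 / (s * (t + g)))"
proof -
  have "g * (s * (t * 2)) + s * (t * (t * 2)) > 0" "g * (s * 2) + s * (t * 2) > 0"
    using assms by (simp_all add: add_pos_pos)
  then show ?thesis using assms by (simp add: field_simps)
qed

lemma frac_help4:
  fixes G S x :: real
  assumes "S > 0" "x > 0" "pi > 0"
  shows "G / S = 2 * G * (x / 2 * (pi / S)) / (pi * x)"
  using assms by (simp add: field_simps)

lemma mid: "\<And>u v::real. u < v \<Longrightarrow> u < (u + v)/2 \<and> (u + v)/2 < v" by auto

theorem mainTheorem14:
  fixes x y z p :: real
  assumes "x \<ge> 0" and "y > 0" and "z > 0" and "p > 0"
  defines "a \<equiv> (y + z) / 2" and "g \<equiv> sqrt (y * z)"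
  shows "\<exists>\<theta>. sqrt (g / a) / (1 + sqrt (x / a)) < \<theta> \<and> \<theta> < a / g + g / p \<and>
           carlson_RJ x y z p =
             carlson_RJ 0 y z p + 3 * sqrt x / (g * p) * (-1 + pi * \<theta> / 4 * sqrt (x / g))"
proof -
  note x0 = assms(1) and y = assms(2) and z = assms(3) and p = assms(4)
  have g0: "g > 0" using y z by (simp add: g_def)
  have a0: "a > 0" using y z by (simp add: a_def)
  have ga: "g \<le> a" unfolding g_def a_def using arith_geo_mean_sqrt[of y z] y z by simp
  have sga: "sqrt (g / a) \<le> 1" using ga a0 g0 by simp
  have ag1: "1 \<le> a / g" using ga g0 by simp
  have gp0: "g / p > 0" using g0 p by simp
  show ?thesis
  proof (cases "x = 0")
    case True
    define \<theta> where "\<theta> = (sqrt (g / a) + (a / g + g / p)) / 2"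
    have "sqrt (g / a) < a / g + g / p" using sga ag1 gp0 by linarith
    then have h1: "sqrt (g / a) < \<theta> \<and> \<theta> < a / g + g / p" unfolding \<theta>_def by (rule mid)
    then show ?thesis using True by (intro exI[of _ \<theta>]) simp
  next
    case False
    then have x: "x > 0" using x0 by simp

    define I where "I = (\<lambda>c t. 1 / (sqrt ((t + c) * (t + y) * (t + z)) * (t + p)))"
    define f where "f = (\<lambda>t. 1 / sqrt t - 1 / sqrt (t + x))"
    define fh where "fh = (\<lambda>t. f t - g * p * (I 0 t - I x t))"
    define J where "J c = integral {0<..} (I c)" for c
    have RJ: "carlson_RJ c y z p = 3 / 2 * J c" for c
      unfolding carlson_RJ_def J_def I_def int_Ici ..
    have Iint: "I c integrable_on {0<..}" if "c \<ge> 0" for c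
      using I_int[OF that y z p] unfolding I_def by simp
    have fint: "(f has_integral 2 * sqrt x) {0<..}" using f_int[OF x] unfolding f_def .
    define D where "D = 2 * sqrt x - g * p * (J 0 - J x)"
    have fh_int: "(fh has_integral D) {0<..}"
      unfolding fh_def D_def J_def
      by (intro has_integral_diff has_integral_mult_right fint integrable_integral Iint) (use x in auto)
    define \<beta> where "\<beta> = (if a = 3 * x / 4 then 7 * x / 8 else 3 * x / 4)"
    have b0: "\<beta> > 0" and b1: "3 * x / 4 \<le> \<beta>" and b2: "\<beta> < x" and b3: "\<beta> \<noteq> a"
      using x by (auto simp: \<beta>_def)
    define L where "L = (\<lambda>t. x / 2 * (sqrt t / ((t + \<beta>) * (t + a))))"
    define U where "U = (\<lambda>t. (a / g + g / p) * (x / 2) * (1 / (sqrt t * (t + g))))"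
    have Lint: "(L has_integral x / 2 * (pi / (sqrt \<beta> + sqrt a))) {0<..}"
      unfolding L_def by (intro has_integral_mult_right q_int b0 a0 b3)
    have Uint: "(U has_integral (a / g + g / p) * (x / 2) * (pi / sqrt g)) {0<..}"
      unfolding U_def by (intro has_integral_mult_right k_int g0)
    have pw: "fh t = f t * (1 - g / sqrt ((t + y) * (t + z)) * (p / (t + p)))" if t: "t > 0" for t
    proof -
      define Q where "Q = sqrt ((t + y) * (t + z))"
      have Q0: "Q > 0" using t y z by (simp add: Q_def)
      have Ic: "I c t = 1 / (sqrt (t + c) * Q * (t + p))" if "c \<ge> 0" for c
        unfolding I_def Q_def by (simp add: real_sqrt_mult mult.assoc)
      have s1: "sqrt t > 0" "sqrt (t + x) > 0" "t + p > 0" using t x p by auto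
      have e: "I 0 t - I x t = f t / (Q * (t + p))"
        unfolding Ic[OF order_refl] Ic[OF x0] f_def using s1 Q0 by (simp add: frac_help1)
      show ?thesis unfolding fh_def Q_def[symmetric] e by (rule frac_help2[OF Q0 s1(3)])
    qed
    have lower: "L t \<le> fh t" if t: "t > 0" for t
    proof -
      define A where "A = g / sqrt ((t + y) * (t + z))"
      define Bq where "Bq = p / (t + p)"
      have A0: "A \<ge> 0" using g0 t y z unfolding A_def by simp
      have Bq1: "Bq \<le> 1" "Bq \<ge> 0" using t p unfolding Bq_def by auto
      have "A * Bq \<le> A" using A0 Bq1 by (simp add: mult_left_le)
      moreover have "A \<le> a / (t + a)" unfolding A_def a_def g_def by (rule Abounds(1)[OF t y z])
      moreover have "1 - a / (t + a) = t / (t + a)" using t a0 by (simp add: field_simps)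
      ultimately have h1: "t / (t + a) \<le> 1 - A * Bq" by linarith
      have fpos: "f t > 0" unfolding f_def by (rule fbounds(3)[OF t x b1])
      have "f t * (t / (t + a)) \<le> f t * (1 - A * Bq)"
        using h1 fpos by (intro mult_left_mono) auto
      moreover have "L t \<le> f t * (t / (t + a))"
      proof -
        have "x * sqrt t / (2 * (t + \<beta>)) \<le> f t * t" unfolding f_def by (rule fbounds(1)[OF t x b1])
        then have "x * sqrt t / (2 * (t + \<beta>)) / (t + a) \<le> f t * t / (t + a)"
          using t a0 by (intro divide_right_mono) auto
        moreover have "L t = x * sqrt t / (2 * (t + \<beta>)) / (t + a)" unfolding L_def
          using t a0 b0 by (simp add: field_simps)
        ultimately show ?thesis by simp
      qed
      ultimately show ?thesis using pw[OF t] unfolding A_def Bq_def by simp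
    qed
    have upper: "fh t < U t" if t: "t > 0" for t
    proof -
      define A where "A = g / sqrt ((t + y) * (t + z))"
      define Bq where "Bq = p / (t + p)"
      have A0: "A \<ge> 0" using g0 t y z unfolding A_def by simp
      have Bq1: "Bq \<le> 1" "Bq \<ge> 0" using t p unfolding Bq_def by auto
      have A1: "A \<le> g / (t + g)" unfolding A_def g_def by (rule Abounds(2)[OF t y z])
      have A2: "1 - A \<le> a / g * (t / (t + g))" unfolding A_def a_def g_def by (rule Abounds(3)[OF t y z])
      have B1: "1 - Bq = t / (t + p)" using t p unfolding Bq_def by (simp add: field_simps)
      have B2: "t / (t + p) \<le> t / p" using t p by (intro divide_left_mono) auto
      have "A * (1 - Bq) \<le> g / (t + g) * (t / p)"
        unfolding B1 using A1 B2 A0 t p by (intro mult_mono) auto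
      also have "\<dots> = g / p * (t / (t + g))" using t g0 p by (simp add: field_simps)
      finally have h2: "A * (1 - Bq) \<le> g / p * (t / (t + g))" .
      have sum: "1 - A * Bq = (1 - A) + A * (1 - Bq)" by (simp add: algebra_simps)
      have hb: "1 - A * Bq \<le> (a / g + g / p) * (t / (t + g))"
        unfolding sum using A2 h2 by (simp add: algebra_simps)
      have "A * Bq \<le> A" using A0 Bq1 by (simp add: mult_left_le)
      moreover have "g / (t + g) < 1" using t g0 by simp
      ultimately have hpos: "1 - A * Bq > 0" using A1 by linarith
      have fb: "f t < x / (2 * t * sqrt t)" unfolding f_def by (rule fbounds(2)[OF t x b1])
      have "f t * (1 - A * Bq) < x / (2 * t * sqrt t) * (1 - A * Bq)"
        using fb hpos by (intro mult_strict_right_mono) auto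
      also have "\<dots> \<le> x / (2 * t * sqrt t) * ((a / g + g / p) * (t / (t + g)))"
        using hb x t by (intro mult_left_mono) auto
      also have "\<dots> = U t" unfolding U_def using t g0 by (intro frac_help3) auto
      finally show ?thesis using pw[OF t] unfolding A_def Bq_def by simp
    qed
    have Dlow: "x / 2 * (pi / (sqrt \<beta> + sqrt a)) \<le> D"
      using integral_le[of L "{0<..}" fh] Lint fh_int lower
      by (simp add: integrable_integral has_integral_integrable_integral)
    have cont: "continuous_on {1..2} (\<lambda>t. U t - fh t)"
      unfolding U_def fh_def f_def I_def
    proof (intro continuous_intros ballI, goal_cases)
      case (1 t) then have "t \<ge> 1" by simp
      then show ?case using x y z p g0 by auto
    next
      case (2 t) then have "t \<ge> 1" by simp
      then show ?case using x y z p g0 by auto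
    next
      case (3 t) then have "t \<ge> 1" by simp
      then show ?case using x y z p g0 by auto
    next
      case (4 t) then have "t \<ge> 1" by simp
      then show ?case using x y z p g0 by auto
    next
      case (5 t) then have "t \<ge> 1" by simp
      then show ?case using x y z p g0 by auto
    qed
    have Dup: "D < (a / g + g / p) * (x / 2) * (pi / sqrt g)"
    proof -
      have "integral {0<..} fh < integral {0<..} U"
        by (rule strict_int) (use fh_int Uint upper cont in \<open>auto simp: has_integral_integrable_integral less_imp_le\<close>)
      then show ?thesis using fh_int Uint by (simp add: has_integral_integrable_integral)
    qed
    define \<theta> where "\<theta> = 2 * sqrt g * D / (pi * x)"
    have sg: "sqrt g > 0" using g0 by simp
    have sx: "sqrt x > 0" using x by simp
    have pi0: "pi > 0" by (rule pi_gt_zero)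
    have lowbound: "sqrt (g / a) / (1 + sqrt (x / a)) = sqrt g / (sqrt a + sqrt x)"
    proof -
      have sa: "sqrt a > 0" using a0 by simp
      show ?thesis unfolding real_sqrt_divide using sa by (simp add: field_simps)
    qed
    have th_low: "sqrt g / (sqrt a + sqrt x) < \<theta>"
    proof -
      have "sqrt \<beta> < sqrt x" using b2 by simp
      then have "sqrt \<beta> + sqrt a < sqrt a + sqrt x" by simp
      moreover have "0 < sqrt \<beta> + sqrt a" using b0 a0 by (simp add: add_pos_pos)
      ultimately have "sqrt g / (sqrt a + sqrt x) < sqrt g / (sqrt \<beta> + sqrt a)"
        using sg sx a0 by (intro divide_strict_left_mono) (auto intro!: mult_pos_pos add_pos_pos)
      also have "sqrt g / (sqrt \<beta> + sqrt a) = 2 * sqrt g * (x / 2 * (pi / (sqrt \<beta> + sqrt a))) / (pi * x)"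
        using x pi0 b0 a0 by (intro frac_help4) (auto intro!: add_pos_pos)
      also have "\<dots> \<le> \<theta>" unfolding \<theta>_def using Dlow sg x pi0
        by (intro divide_right_mono mult_left_mono) auto
      finally show ?thesis .
    qed
    have th_up: "\<theta> < a / g + g / p"
    proof -
      have "\<theta> < 2 * sqrt g * ((a / g + g / p) * (x / 2) * (pi / sqrt g)) / (pi * x)"
        unfolding \<theta>_def using Dup sg x pi0
        by (intro divide_strict_right_mono mult_strict_left_mono) auto
      also have "\<dots> = a / g + g / p" using sg x pi0 by (simp add: field_simps)
      finally show ?thesis .
    qed
    have eq: "carlson_RJ x y z p = carlson_RJ 0 y z p + 3 * sqrt x / (g * p) * (-1 + pi * \<theta> / 4 * sqrt (x / g))"
    proof -
      define r where "r = sqrt x"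
      have r0: "r > 0" and xr: "x = r * r" using x by (auto simp: r_def)
      have e1: "pi * \<theta> / 4 * sqrt (x / g) = D / (2 * r)"
        unfolding \<theta>_def real_sqrt_divide r_def[symmetric] unfolding xr
        using sg r0 pi0 by (simp add: field_simps)
      show ?thesis unfolding RJ e1 r_def[symmetric] using r0 g0 p
        by (simp add: D_def r_def[symmetric] field_simps)
    qed
    show ?thesis
      by (rule exI[of _ \<theta>]) (use lowbound th_low th_up eq in simp)
  qed
qed

end
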